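(* Suppose that for every agent $i$ and every date $n$, the period utility $u_{in}$ is twice continuously differentiable on $\mathbb R_{++}$, satisfies $u_{in}'(x)>0$ and $u_{in}''(x)<0$ for every $x>0$, and satisfies $\lim_{x\to 0}u_{in}'(x)=+\infty$. Let $(\bar p,\bar x)$ be a competitive equilibrium of $\mathcal E^{N,\beta}$. Then for each agent $i\in I_N$ and each $m,n=1,\dots,N$, $$\frac{d\xi_{in}}{dp_m}(\bar p)=S_i(m,n)+M_i(m,n),$$ where $$S_i(m,n):=\frac{\bar r_{im}\bar r_{in}}{\bar r_i}-\frac{\bar r_{in}}{\bar p_n}\mathbf 1_{\{m=n\}},\qquad M_i(m,n):=\frac{\bar r_{in}}{\bar r_i}(\omega_{im}-\bar x_{im}).$$ Here $\bar r_{in}:=\frac{u_{in}'(\bar x_{in})}{-u_{in}''(\bar x_{in})}$ and $\bar r_i:=\bar r_{i0}+\sum_{n=1}^N\bar p_n\bar r_{in}$.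
   Context: $\mathcal E^{N,\beta}$ is a finite exchange economy with agents $I_N$ and dated commodities $0,1,\dots,N$. Agent $i$ has utility $U_i(x_i)=\sum_{n=0}^N\beta^n u_{in}(x_{in})$, $\beta\in(0,1)$, and endowment $\omega_i\in\mathbb R_+^{N+1}$. The price of commodity $0$ is one and $p=(p_1,\dots,p_N)$ are future prices; agent $i$ maximizes $U_i$ subject to $x_{i0}+\sum_{n=1}^N p_nx_{in}\le\omega_{i0}+\sum_{n=1}^N p_n\omega_{in}$, with Marshallian demand $\xi_i(p)$ (wealth evaluated at the endowment, so $d/dp_m$ is the total derivative including the endowment-wealth effect). A competitive equilibrium $(\bar p,\bar x)$ satisfies market clearing for future goods and $\bar x_i=\xi_i(\bar p)$. *)

theory Defs
  imports "HOL-Analysis.Analysis"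
begin

(* Commodities are dated 0..N; a bundle is a function
  nat => real, relevant on 0..N. Prices: p :: nat => real, only p 1..p N are used;
  the price of commodity 0 is normalised to one. *)

definition budget :: "nat \<Rightarrow> (nat \<Rightarrow> real) \<Rightarrow> (nat \<Rightarrow> real) \<Rightarrow> (nat \<Rightarrow> real) \<Rightarrow> bool" where
  "budget N p w x \<longleftrightarrow>
     x 0 + (\<Sum>n=1..N. p n * x n) \<le> w 0 + (\<Sum>n=1..N. p n * w n)"

(* Admissible consumption bundles: strictly positive in every date 0..N
  (the period utilities are only defined on the positive reals), zero beyond N. *)
definition admissible :: "nat \<Rightarrow> (nat \<Rightarrow> real) \<Rightarrow> bool" where
  "admissible N x \<longleftrightarrow> (\<forall>n\<le>N. 0 < x n) \<and> (\<forall>n>N. x n = 0)"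

definition util :: "nat \<Rightarrow> real \<Rightarrow> (nat \<Rightarrow> real \<Rightarrow> real) \<Rightarrow> (nat \<Rightarrow> real) \<Rightarrow> real" where
  "util N \<beta> ui x = (\<Sum>n=0..N. \<beta> ^ n * ui n (x n))"

definition is_demand ::
  "nat \<Rightarrow> real \<Rightarrow> (nat \<Rightarrow> real \<Rightarrow> real) \<Rightarrow> (nat \<Rightarrow> real) \<Rightarrow> (nat \<Rightarrow> real) \<Rightarrow> (nat \<Rightarrow> real) \<Rightarrow> bool" where
  "is_demand N \<beta> ui w p x \<longleftrightarrow> admissible N x \<and> budget N p w x \<and>
     (\<forall>y. admissible N y \<and> budget N p w y \<longrightarrow> util N \<beta> ui y \<le> util N \<beta> ui x)"

(* Marshallian demand xi_i(p) (wealth evaluated at the endowment w). *)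
definition demand ::
  "nat \<Rightarrow> real \<Rightarrow> (nat \<Rightarrow> real \<Rightarrow> real) \<Rightarrow> (nat \<Rightarrow> real) \<Rightarrow> (nat \<Rightarrow> real) \<Rightarrow> (nat \<Rightarrow> real)" where
  "demand N \<beta> ui w p = (THE x. is_demand N \<beta> ui w p x)"

definition competitive_equilibrium ::
  "nat \<Rightarrow> real \<Rightarrow> 'a set \<Rightarrow> ('a \<Rightarrow> nat \<Rightarrow> real \<Rightarrow> real) \<Rightarrow> ('a \<Rightarrow> nat \<Rightarrow> real)
   \<Rightarrow> (nat \<Rightarrow> real) \<Rightarrow> ('a \<Rightarrow> nat \<Rightarrow> real) \<Rightarrow> bool" where
  "competitive_equilibrium N \<beta> I u \<omega> p x \<longleftrightarrow>
     (\<forall>n\<in>{1..N}. 0 < p n) \<and>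
     (\<forall>i\<in>I. is_demand N \<beta> (u i) (\<omega> i) p (x i) \<and> x i = demand N \<beta> (u i) (\<omega> i) p) \<and>
     (\<forall>n\<in>{1..N}. (\<Sum>i\<in>I. x i n) = (\<Sum>i\<in>I. \<omega> i n))"

end

theory Submission
  imports Defs
begin


lemma dec_strict:
  fixes v' v'' :: "real \<Rightarrow> real"
  assumes d: "\<forall>x>0. (v' has_real_derivative v'' x) (at x)" and n: "\<forall>x>0. v'' x < 0"
    and a: "0 < a" and ab: "a < b"
  shows "v' b < v' a"
proof (rule DERIV_neg_imp_decreasing[OF ab])
  fix x assume "a \<le> x" "x \<le> b"
  hence "x > 0" using a by simp
  thus "\<exists>y. (v' has_real_derivative y) (at x) \<and> y < 0" using d n by blast
qed

lemma inc_strict: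
  fixes v v' :: "real \<Rightarrow> real"
  assumes d: "\<forall>x>0. (v has_real_derivative v' x) (at x)" and n: "\<forall>x>0. v' x > 0"
    and a: "0 < a" and ab: "a < b"
  shows "v a < v b"
proof (rule DERIV_pos_imp_increasing[OF ab])
  fix x assume "a \<le> x" "x \<le> b"
  hence "x > 0" using a by simp
  thus "\<exists>y. (v has_real_derivative y) (at x) \<and> y > 0" using d n by blast
qed

lemma tangent_strict:
  fixes v v' :: "real \<Rightarrow> real"
  assumes d: "\<forall>x>0. (v has_real_derivative v' x) (at x)"
    and dec: "\<forall>a b. 0 < a \<longrightarrow> a < b \<longrightarrow> v' b < v' a"
    and a: "0 < a" and b: "0 < b" and ne: "a \<noteq> b"
  shows "v b < v a + v' a * (b - a)"
proof (cases "a < b")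
  case True
  have "\<And>x. a \<le> x \<Longrightarrow> x \<le> b \<Longrightarrow> (v has_real_derivative v' x) (at x)"
    using d a by (simp add: less_le_trans)
  from MVT2[OF True this] obtain z where z: "a < z" "z < b" "v b - v a = (b - a) * v' z"
    by blast
  have "v' z < v' a" using dec a z by (meson less_trans)
  hence "(b - a) * v' z < (b - a) * v' a" using True by simp
  thus ?thesis using z by (simp add: right_diff_distrib mult.commute)
next
  case False
  hence ba: "b < a" using ne by simp
  have "\<And>x. b \<le> x \<Longrightarrow> x \<le> a \<Longrightarrow> (v has_real_derivative v' x) (at x)"
    using d b by (simp add: less_le_trans)
  from MVT2[OF ba this] obtain z where z: "b < z" "z < a" "v a - v b = (a - b) * v' z"
    by blast
  have "v' a < v' z" using dec b z by (meson less_trans)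
  hence "(a - b) * v' a < (a - b) * v' z" using ba by simp
  thus ?thesis using z by (simp add: right_diff_distrib mult.commute)
qed

lemma tangent_le:
  fixes v v' :: "real \<Rightarrow> real"
  assumes d: "\<forall>x>0. (v has_real_derivative v' x) (at x)"
    and dec: "\<forall>a b. 0 < a \<longrightarrow> a < b \<longrightarrow> v' b < v' a"
    and a: "0 < a" and b: "0 < b"
  shows "v b \<le> v a + v' a * (b - a)"
proof (cases "a = b")
  case False
  thus ?thesis using tangent_strict[OF d dec a b] by simp
qed simp

lemma foc_demand:
  fixes v v' :: "nat \<Rightarrow> real \<Rightarrow> real" and p w x :: "nat \<Rightarrow> real"
  assumes beta: "\<beta> > 0"
    and d: "\<forall>n\<le>N. \<forall>x>0. (v n has_real_derivative v' n x) (at x)"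
    and dec: "\<forall>n\<le>N. \<forall>a b. 0 < a \<longrightarrow> a < b \<longrightarrow> v' n b < v' n a"
    and adm: "admissible N x"
    and bud: "x 0 + (\<Sum>n=1..N. p n * x n) = w 0 + (\<Sum>n=1..N. p n * w n)"
    and lam: "lam > 0"
    and foc0: "v' 0 (x 0) = lam"
    and foc: "\<forall>n\<in>{1..N}. \<beta> ^ n * v' n (x n) = lam * p n"
  shows "is_demand N \<beta> v w p x" and "demand N \<beta> v w p = x"
proof -
  have key: "util N \<beta> v y < util N \<beta> v x"
    if ya: "admissible N y" and yb: "budget N p w y" and yne: "y \<noteq> x" for y
  proof -
    have xp: "\<forall>n\<le>N. 0 < x n" and yp: "\<forall>n\<le>N. 0 < y n"
      using adm ya unfolding admissible_def by auto
    obtain k where k: "y k \<noteq> x k" using yne by auto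
    have kN: "k \<le> N"
    proof (rule ccontr)
      assume "\<not> k \<le> N"
      thus False using k adm ya unfolding admissible_def by auto
    qed
    define T where "T n = \<beta> ^ n * v n (x n) + \<beta> ^ n * v' n (x n) * (y n - x n)" for n
    have le: "\<beta> ^ n * v n (y n) \<le> T n" if "n \<in> {0..N}" for n
    proof -
      have "v n (y n) \<le> v n (x n) + v' n (x n) * (y n - x n)"
        using tangent_le[of "v n" "v' n" "x n" "y n"] d dec xp yp that by auto
      hence "\<beta> ^ n * v n (y n) \<le> \<beta> ^ n * (v n (x n) + v' n (x n) * (y n - x n))"
        using beta by (intro mult_left_mono) auto
      thus ?thesis unfolding T_def by (simp add: distrib_left mult.assoc)
    qed
    have lt: "\<beta> ^ k * v n (y k) < T k" if "n = k" for n
    proof -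
      have "v k (y k) < v k (x k) + v' k (x k) * (y k - x k)"
        using tangent_strict[of "v k" "v' k" "x k" "y k"] d dec xp yp kN k by auto
      hence "\<beta> ^ k * v k (y k) < \<beta> ^ k * (v k (x k) + v' k (x k) * (y k - x k))"
        using beta by (intro mult_strict_left_mono) auto
      thus ?thesis unfolding T_def using that by (simp add: distrib_left mult.assoc)
    qed
    have "util N \<beta> v y < sum T {0..N}"
      unfolding util_def
      by (rule sum_strict_mono_ex1) (use le lt kN in auto)
    also have "sum T {0..N} = util N \<beta> v x + (\<Sum>n=0..N. \<beta> ^ n * v' n (x n) * (y n - x n))"
      unfolding T_def util_def by (simp only: sum.distrib)
    also have "(\<Sum>n=0..N. \<beta> ^ n * v' n (x n) * (y n - x n))
        = lam * (y 0 - x 0) + (\<Sum>n=1..N. \<beta> ^ n * v' n (x n) * (y n - x n))"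
      using foc0 by (simp add: sum.atLeast_Suc_atMost)
    also have "(\<Sum>n=1..N. \<beta> ^ n * v' n (x n) * (y n - x n)) = (\<Sum>n=1..N. lam * (p n * y n - p n * x n))"
    proof (rule sum.cong)
      fix n assume "n \<in> {1..N}"
      hence "\<beta> ^ n * v' n (x n) = lam * p n" using foc by blast
      thus "\<beta> ^ n * v' n (x n) * (y n - x n) = lam * (p n * y n - p n * x n)"
        by (simp add: right_diff_distrib mult.assoc)
    qed simp
    also have "lam * (y 0 - x 0) + (\<Sum>n=1..N. lam * (p n * y n - p n * x n))
        = lam * ((y 0 + (\<Sum>n=1..N. p n * y n)) - (x 0 + (\<Sum>n=1..N. p n * x n)))"
      by (simp add: sum_distrib_left[symmetric] sum_subtractf right_diff_distrib distrib_left)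
    also have "\<dots> \<le> 0"
      using yb bud lam unfolding budget_def by (intro mult_nonneg_nonpos) auto
    finally show ?thesis by simp
  qed
  have xb: "budget N p w x" using bud unfolding budget_def by simp
  show dem: "is_demand N \<beta> v w p x"
    unfolding is_demand_def
  proof (intro conjI adm xb allI impI)
    fix y assume "admissible N y \<and> budget N p w y"
    thus "util N \<beta> v y \<le> util N \<beta> v x" using key[of y] by (cases "y = x") auto
  qed
  show "demand N \<beta> v w p = x"
    unfolding demand_def
  proof (rule the_equality)
    fix y assume "is_demand N \<beta> v w p y"
    thus "y = x" using key[of y] adm xb unfolding is_demand_def by force
  qed (rule dem)
qed



lemma sum_split0:
  fixes f :: "nat \<Rightarrow> real"
  shows "(\<Sum>k=0..N. f k) = f 0 + (\<Sum>k=1..N. f k)"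
  by (simp add: sum.atLeast_Suc_atMost)

lemma sum_split_n:
  fixes f :: "nat \<Rightarrow> real"
  assumes "n \<in> {1..N}"
  shows "(\<Sum>k=1..N. f k) = f n + (\<Sum>k\<in>{1..N}-{n}. f k)"
  using assms by (simp add: sum.remove)

lemma demand_budget_eq:
  fixes v v' :: "nat \<Rightarrow> real \<Rightarrow> real" and p w x :: "nat \<Rightarrow> real"
  assumes d: "\<forall>n\<le>N. \<forall>x>0. (v n has_real_derivative v' n x) (at x)"
    and pos: "\<forall>n\<le>N. \<forall>x>0. v' n x > 0"
    and dem: "is_demand N \<beta> v w p x"
  shows "x 0 + (\<Sum>n=1..N. p n * x n) = w 0 + (\<Sum>n=1..N. p n * w n)"
proof (rule ccontr)
  assume ne: "\<not> ?thesis"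
  have adm: "admissible N x" and bud: "budget N p w x"
    and mx: "\<And>y. admissible N y \<Longrightarrow> budget N p w y \<Longrightarrow> util N \<beta> v y \<le> util N \<beta> v x"
    using dem unfolding is_demand_def by auto
  define s where "s = (w 0 + (\<Sum>n=1..N. p n * w n)) - (x 0 + (\<Sum>n=1..N. p n * x n))"
  have s: "s > 0" using ne bud unfolding s_def budget_def by simp
  define y where "y = x(0 := x 0 + s)"
  have x0: "x 0 > 0" using adm unfolding admissible_def by simp
  have eqs: "(\<Sum>n=1..N. g n (y n)) = (\<Sum>n=1..N. g n (x n))" for g :: "nat \<Rightarrow> real \<Rightarrow> real"
    by (rule sum.cong) (auto simp: y_def)
  have ya: "admissible N y" using adm s x0 unfolding admissible_def y_def by auto
  have yb: "budget N p w y"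
    unfolding budget_def using eqs[of "\<lambda>n z. p n * z"] by (simp add: y_def s_def)
  have "v 0 (x 0) < v 0 (x 0 + s)"
    using inc_strict[of "v 0" "v' 0" "x 0" "x 0 + s"] d pos x0 s by simp
  hence "util N \<beta> v x < util N \<beta> v y"
    unfolding util_def sum_split0[of _ N] using eqs[of "\<lambda>n z. \<beta> ^ n * v n z"]
    by (simp add: y_def)
  thus False using mx[OF ya yb] by simp
qed

lemma demand_foc:
  fixes v v' :: "nat \<Rightarrow> real \<Rightarrow> real" and p w x :: "nat \<Rightarrow> real"
  assumes d: "\<forall>n\<le>N. \<forall>x>0. (v n has_real_derivative v' n x) (at x)"
    and pp: "\<forall>n\<in>{1..N}. 0 < p n"
    and dem: "is_demand N \<beta> v w p x"
    and n: "n \<in> {1..N}"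
  shows "\<beta> ^ n * v' n (x n) = v' 0 (x 0) * p n"
proof -
  have adm: "admissible N x" and bud: "budget N p w x"
    and mx: "\<And>y. admissible N y \<Longrightarrow> budget N p w y \<Longrightarrow> util N \<beta> v y \<le> util N \<beta> v x"
    using dem unfolding is_demand_def by auto
  have n0: "n \<noteq> 0" and nN: "n \<le> N" using n by auto
  have pn: "p n > 0" using pp n by blast
  have x0: "x 0 > 0" and xn: "x n > 0" using adm nN unfolding admissible_def by auto
  define y where "y e = (x(n := x n + e))(0 := x 0 - e * p n)" for e
  define C where "C = (\<Sum>k\<in>{1..N}-{n}. \<beta> ^ k * v k (x k))"
  define phi where "phi e = C + v 0 (x 0 - e * p n) + \<beta> ^ n * v n (x n + e)" for e
  have rest: "(\<Sum>k\<in>{1..N}-{n}. g k (y e k)) = (\<Sum>k\<in>{1..N}-{n}. g k (x k))"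
    for g :: "nat \<Rightarrow> real \<Rightarrow> real" and e
    by (rule sum.cong) (auto simp: y_def)
  have utl: "util N \<beta> v (y e) = phi e" for e
    unfolding util_def sum_split0[of _ N] sum_split_n[OF n] phi_def C_def
    using rest[of "\<lambda>k z. \<beta> ^ k * v k z" e] n0 by (simp add: y_def)
  have budy: "budget N p w (y e)" for e
  proof -
    have "y e 0 + (\<Sum>k=1..N. p k * y e k) = x 0 + (\<Sum>k=1..N. p k * x k)"
      unfolding sum_split_n[OF n] using rest[of "\<lambda>k z. p k * z" e] n0
      by (simp add: y_def algebra_simps)
    thus ?thesis using bud unfolding budget_def by simp
  qed
  define del where "del = min (x n) (x 0 / p n)"
  have del: "del > 0" unfolding del_def using xn x0 pn by simp
  have le: "\<forall>e. \<bar>0 - e\<bar> < del \<longrightarrow> phi e \<le> phi 0"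
  proof (intro allI impI)
    fix e assume e: "\<bar>0 - e\<bar> < del"
    have "e * p n < x 0"
    proof -
      have "e < x 0 / p n" using e unfolding del_def by auto
      thus ?thesis using pn by (simp add: pos_less_divide_eq)
    qed
    moreover have "x n + e > 0" using e unfolding del_def by auto
    ultimately have "admissible N (y e)"
      using adm n0 nN unfolding admissible_def y_def by auto
    hence "util N \<beta> v (y e) \<le> util N \<beta> v x" using mx budy by blast
    moreover have "y 0 = x" unfolding y_def by auto
    ultimately show "phi e \<le> phi 0" using utl by metis
  qed
  have der: "(phi has_real_derivative (v' 0 (x 0) * (- p n) + \<beta> ^ n * v' n (x n))) (at 0)"
  proof -
    have d0: "(v 0 has_real_derivative v' 0 (x 0)) (at ((\<lambda>e. x 0 - e * p n) 0))" using d x0 by simp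
    have g0: "((\<lambda>e. x 0 - e * p n) has_real_derivative (- p n)) (at 0)"
      by (rule derivative_eq_intros | simp)+
    have dn: "(v n has_real_derivative v' n (x n)) (at ((\<lambda>e. x n + e) 0))" using d xn nN by simp
    have gn: "((\<lambda>e. x n + e) has_real_derivative 1) (at 0)"
      by (rule derivative_eq_intros | simp)+
    have c0: "((\<lambda>e. v 0 (x 0 - e * p n)) has_real_derivative v' 0 (x 0) * (- p n)) (at 0)"
      using DERIV_chain2[OF d0 g0] by simp
    have cn: "((\<lambda>e. v n (x n + e)) has_real_derivative v' n (x n) * 1) (at 0)"
      using DERIV_chain2[OF dn gn] by simp
    have "((\<lambda>e. C + v 0 (x 0 - e * p n) + \<beta> ^ n * v n (x n + e)) has_real_derivative
        0 + v' 0 (x 0) * (- p n) + \<beta> ^ n * (v' n (x n) * 1)) (at 0)"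
      by (intro DERIV_add DERIV_cmult c0 cn DERIV_const)
    thus ?thesis unfolding phi_def by simp
  qed
  have "v' 0 (x 0) * (- p n) + \<beta> ^ n * v' n (x n) = 0"
    by (rule DERIV_local_max[OF der del le])
  thus ?thesis by (simp add: algebra_simps)
qed



definition ginv :: "(real \<Rightarrow> real) \<Rightarrow> real \<Rightarrow> real" where
  "ginv f y = (THE z. 0 < z \<and> f z = y)"

locale decf =
  fixes f f' :: "real \<Rightarrow> real"
  assumes der: "\<forall>x>0. (f has_real_derivative f' x) (at x)"
    and neg: "\<forall>x>0. f' x < 0"
begin

lemma decr: "0 < a \<Longrightarrow> a < b \<Longrightarrow> f b < f a"
  using dec_strict[OF der neg] by blast

lemma injf: assumes "0 < a" "0 < b" "f a = f b" shows "a = b"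
proof (rule linorder_cases[of a b])
  assume "a < b" thus ?thesis using decr[of a b] assms by simp
next
  assume "b < a" thus ?thesis using decr[of b a] assms by simp
qed

lemma ginv_f: "0 < z \<Longrightarrow> ginv f (f z) = z"
  unfolding ginv_def by (rule the_equality) (auto intro: injf)

lemma ginv_range: "y \<in> f ` {0<..} \<Longrightarrow> ginv f y > 0 \<and> f (ginv f y) = y"
  using ginv_f by auto

lemma contf: "0 < x \<Longrightarrow> isCont f x"
  using der DERIV_isCont by blast

lemma nbhd: assumes z: "0 < z"
  shows "\<exists>d>0. \<forall>y. \<bar>y - f z\<bar> < d \<longrightarrow> y \<in> f ` {0<..}"
proof -
  define a where "a = z / 2"
  define b where "b = z + 1"
  have a: "0 < a" "a < z" and b: "z < b" using z unfolding a_def b_def by auto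
  have fa: "f z < f a" using decr a by blast
  have fb: "f b < f z" using decr z b by blast
  define d where "d = min (f a - f z) (f z - f b)"
  have "d > 0" using fa fb unfolding d_def by simp
  moreover have "y \<in> f ` {0<..}" if y: "\<bar>y - f z\<bar> < d" for y
  proof -
    have "f b \<le> y" "y \<le> f a" using y unfolding d_def by auto
    moreover have "a \<le> b" using a b by simp
    moreover have "\<forall>x. a \<le> x \<and> x \<le> b \<longrightarrow> isCont f x" using a contf by auto
    ultimately obtain x where "a \<le> x" "x \<le> b" "f x = y" using IVT2[of f b y a] by blast
    thus ?thesis using a by force
  qed
  ultimately show ?thesis by blast
qed

lemma open_range: "open (f ` {0<..})"
  unfolding open_contains_ball
proof
  fix y assume "y \<in> f ` {0<..}"
  then obtain z where z: "z > 0" "y = f z" by auto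
  obtain d where d: "d > 0" "\<forall>w. \<bar>w - f z\<bar> < d \<longrightarrow> w \<in> f ` {0<..}" using nbhd[OF z(1)] by blast
  have "ball y d \<subseteq> f ` {0<..}"
  proof
    fix w assume "w \<in> ball y d"
    hence "\<bar>w - f z\<bar> < d" using z by (simp add: dist_real_def abs_minus_commute)
    thus "w \<in> f ` {0<..}" using d by blast
  qed
  thus "\<exists>e>0. ball y e \<subseteq> f ` {0<..}" using d by blast
qed

lemma ginv_deriv0: assumes z: "0 < z"
  shows "(ginv f has_real_derivative inverse (f' z)) (at (f z))"
proof -
  obtain d where d: "d > 0" "\<forall>y. \<bar>y - f z\<bar> < d \<longrightarrow> y \<in> f ` {0<..}" using nbhd[OF z] by blast
  have c: "isCont (ginv f) (f z)"
  proof (rule isCont_inverse_function[where f=f and g="ginv f" and x=z and d = "z/2"])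
    show "0 < z / 2" using z by simp
  next
    fix w assume "\<bar>w - z\<bar> \<le> z / 2"
    hence "w > 0" using z abs_ge_minus_self[of "w - z"] by linarith
    thus "ginv f (f w) = w" using ginv_f by auto
  next
    fix w assume "\<bar>w - z\<bar> \<le> z / 2"
    hence "w > 0" using z abs_ge_minus_self[of "w - z"] by linarith
    thus "isCont f w" using contf by auto
  qed
  show ?thesis
  proof (rule DERIV_inverse_function[where a = "f z - d" and b = "f z + d"])
    show "(f has_real_derivative f' z) (at (ginv f (f z)))" using der z ginv_f by simp
    show "f' z \<noteq> 0" using neg z by (metis less_irrefl)
    show "f z - d < f z" "f z < f z + d" using d by auto
    fix y assume "f z - d < y" "y < f z + d"
    hence "\<bar>y - f z\<bar> < d" by auto
    thus "f (ginv f y) = y" using d ginv_range by blast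
  qed (rule c)
qed

lemma ginv_deriv: assumes "y \<in> f ` {0<..}"
  shows "(ginv f has_real_derivative inverse (f' (ginv f y))) (at y)"
proof -
  have "ginv f y > 0" "f (ginv f y) = y" using ginv_range[OF assms] by auto
  thus ?thesis using ginv_deriv0[of "ginv f y"] by simp
qed

lemma ginv_decr: assumes "y1 \<in> f ` {0<..}" "y2 \<in> f ` {0<..}" "y1 < y2"
  shows "ginv f y2 < ginv f y1"
proof (rule ccontr)
  assume "\<not> ?thesis"
  hence le: "ginv f y1 \<le> ginv f y2" by simp
  have r1: "ginv f y1 > 0" "f (ginv f y1) = y1" and r2: "ginv f y2 > 0" "f (ginv f y2) = y2"
    using ginv_range assms by auto
  show False
  proof (cases "ginv f y1 = ginv f y2")
    case True thus False using r1 r2 assms(3) by simp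
  next
    case False
    hence "ginv f y1 < ginv f y2" using le by simp
    hence "f (ginv f y2) < f (ginv f y1)" using decr r1 by blast
    thus False using r1 r2 assms(3) by simp
  qed
qed

end



lemma main_agent:
  fixes v v' v'' :: "nat \<Rightarrow> real \<Rightarrow> real" and w x0 pb :: "nat \<Rightarrow> real"
    and N m n :: nat and \<beta> :: real
  assumes beta: "0 < \<beta>"
    and d1: "\<forall>k\<le>N. \<forall>x>0. (v k has_real_derivative v' k x) (at x)"
    and d2: "\<forall>k\<le>N. \<forall>x>0. (v' k has_real_derivative v'' k x) (at x)"
    and pos: "\<forall>k\<le>N. \<forall>x>0. v' k x > 0"
    and conc: "\<forall>k\<le>N. \<forall>x>0. v'' k x < 0"
    and pp: "\<forall>k\<in>{1..N}. 0 < pb k"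
    and dem: "is_demand N \<beta> v w pb x0"
    and m: "m \<in> {1..N}" and n: "n \<in> {1..N}"
  shows "let r = (\<lambda>k. v' k (x0 k) / (- v'' k (x0 k)));
         R = r 0 + (\<Sum>k=1..N. pb k * r k);
         S = r m * r n / R - (if m = n then r n / pb n else 0);
         M = r n / R * (w m - x0 m)
     in ((\<lambda>t. demand N \<beta> v w (pb(m := t)) n) has_real_derivative (S + M)) (at (pb m))"
proof -
  have dk: "decf (v' k) (v'' k)" if "k \<le> N" for k
    unfolding decf_def using d2 conc that by blast
  have decv: "\<forall>k\<le>N. \<forall>a b. 0 < a \<longrightarrow> a < b \<longrightarrow> v' k b < v' k a"
    using dec_strict d2 conc by blast
  have adm0: "admissible N x0" using dem unfolding is_demand_def by blast
  have x0p: "\<And>k. k \<le> N \<Longrightarrow> 0 < x0 k" using adm0 unfolding admissible_def by blast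
  have m0: "m \<noteq> 0" "m \<le> N" using m by auto
  have n0: "n \<noteq> 0" "n \<le> N" using n by auto
  define lam0 where "lam0 = v' 0 (x0 0)"
  have lam0p: "lam0 > 0" unfolding lam0_def using pos x0p by blast
  have foc0: "\<And>k. k \<in> {1..N} \<Longrightarrow> \<beta> ^ k * v' k (x0 k) = lam0 * pb k"
    unfolding lam0_def using demand_foc[OF d1 pp dem] by blast
  have bud0: "x0 0 + (\<Sum>k=1..N. pb k * x0 k) = w 0 + (\<Sum>k=1..N. pb k * w k)"
    using demand_budget_eq[OF d1 pos dem] .
  define t0 where "t0 = pb m"
  have t0p: "t0 > 0" unfolding t0_def using pp m by blast
  define c where "c k t = (if k = 0 then 1 else if k = m then t else pb k)" for k t
  have cpos: "\<And>k t. k \<le> N \<Longrightarrow> 0 < t \<Longrightarrow> 0 < c k t"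
    unfolding c_def using pp by auto
  have ct0: "\<And>k. k \<in> {1..N} \<Longrightarrow> c k t0 = pb k"
    unfolding c_def t0_def by auto
  define RR where "RR k = v' k ` {0<..}" for k
  define h where "h k z = fst z * c k (snd z) / \<beta> ^ k" for k and z :: "real \<times> real"
  define G where "G k z = ginv (v' k) (h k z)" for k z
  define E where "E z = (\<Sum>k=0..N. c k (snd z) * (G k z - w k))" for z
  define F where "F z = (E z, snd z)" for z
  define S where "S = {z. 0 < fst z \<and> 0 < snd z \<and> (\<forall>k\<le>N. h k z \<in> RR k)}"
  define z0 where "z0 = (lam0, t0)"
  have sz0: "snd z0 = t0" "fst z0 = lam0" unfolding z0_def by auto
  have hz0: "h k z0 = v' k (x0 k)" if "k \<le> N" for k
  proof (cases "k = 0")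
    case True thus ?thesis unfolding h_def z0_def c_def lam0_def by simp
  next
    case False
    hence "k \<in> {1..N}" using that by auto
    thus ?thesis unfolding h_def z0_def using ct0 foc0 beta
      by (simp add: field_simps)
  qed
  have Gz0: "G k z0 = x0 k" if "k \<le> N" for k
    unfolding G_def using hz0[OF that] decf.ginv_f[OF dk[OF that] x0p[OF that]] by simp
  have z0S: "z0 \<in> S"
    unfolding S_def RR_def using hz0 lam0p t0p x0p unfolding z0_def by auto
  have Ez0: "E z0 = 0"
  proof -
    have "E z0 = (\<Sum>k=0..N. c k t0 * (x0 k - w k))"
      unfolding E_def by (rule sum.cong) (auto simp: Gz0 sz0)
    also have "\<dots> = (x0 0 - w 0) + (\<Sum>k=1..N. pb k * x0 k - pb k * w k)"
    proof -
      have "(\<Sum>k=1..N. c k t0 * (x0 k - w k)) = (\<Sum>k=1..N. pb k * x0 k - pb k * w k)"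
        by (rule sum.cong) (simp_all add: ct0 right_diff_distrib)
      thus ?thesis unfolding sum_split0[of _ N] by (simp add: c_def)
    qed
    also have "\<dots> = 0" using bud0 by (simp add: sum_subtractf)
    finally show ?thesis .
  qed
  have hform: "h k = (\<lambda>z. fst z * (if k = 0 then 1 else if k = m then snd z else pb k) / \<beta> ^ k)" for k
    unfolding h_def c_def by (simp add: fun_eq_iff)
  have hcont: "isCont (h k) z" for k z
  proof (cases "k = 0")
    case True thus ?thesis using beta unfolding hform by (auto intro!: continuous_intros)
  next
    case k: False show ?thesis
    proof (cases "k = m")
      case True thus ?thesis using k beta unfolding hform by (auto intro!: continuous_intros)
    next
      case False thus ?thesis using k beta unfolding hform by (auto intro!: continuous_intros)
    qed
  qed
  have ccont: "isCont (\<lambda>z. c k (snd z)) z" for k and z :: "real \<times> real"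
  proof (cases "k = 0")
    case True thus ?thesis unfolding c_def by simp
  next
    case k: False show ?thesis
    proof (cases "k = m")
      case True thus ?thesis using k unfolding c_def by (simp add: continuous_intros)
    next
      case False thus ?thesis using k unfolding c_def by simp
    qed
  qed
  have RRopen: "open (RR k)" if "k \<le> N" for k
    unfolding RR_def using decf.open_range[OF dk[OF that]] .
  have Sform: "S = (fst -` {0<..}) \<inter> (snd -` {0<..}) \<inter> (\<Inter>k\<in>{..N}. h k -` RR k)"
    unfolding S_def by auto
  have openS: "open S"
    unfolding Sform
  proof (intro open_Int open_INT)
    show "open (fst -` {0<..} :: (real \<times> real) set)"
      by (rule continuous_open_vimage) (auto intro: continuous_intros)
    show "open (snd -` {0<..} :: (real \<times> real) set)"
      by (rule continuous_open_vimage) (auto intro: continuous_intros)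
    show "finite {..N}" by simp
    show "\<forall>k\<in>{..N}. open (h k -` RR k)"
      using continuous_open_vimage[OF RRopen hcont] by auto
  qed
  have Gder: "(ginv (v' k) has_real_derivative inverse (v'' k (ginv (v' k) (h k z)))) (at (h k z))"
    if "z \<in> S" "k \<le> N" for k z
  proof -
    have "h k z \<in> RR k" using that unfolding S_def by simp
    thus ?thesis using decf.ginv_deriv[OF dk[OF that(2)]] unfolding RR_def by simp
  qed
  have Gcont: "isCont (G k) z" if "z \<in> S" "k \<le> N" for k z
    unfolding G_def using isCont_o2[OF hcont DERIV_isCont[OF Gder[OF that]]] .
  have Econt: "isCont E z" if "z \<in> S" for z
    unfolding E_def
  proof (rule continuous_sum)
    fix k assume "k \<in> {0..N}"
    hence "k \<le> N" by simp
    thus "isCont (\<lambda>z. c k (snd z) * (G k z - w k)) z"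
      by (intro continuous_mult ccont continuous_diff Gcont[OF that] continuous_const)
  qed
  have contF: "continuous_on S F"
  proof (rule continuous_at_imp_continuous_on, rule ballI)
    fix z assume zS: "z \<in> S"
    show "isCont F z" unfolding F_def
      by (intro continuous_Pair Econt[OF zS] continuous_snd continuous_ident)
  qed
  have Sprops: "0 < fst z" "0 < snd z" "\<And>k. k \<le> N \<Longrightarrow> h k z \<in> RR k" if "z \<in> S" for z
    using that unfolding S_def by auto
  have Edec: "E z2 < E z1" if z1: "z1 \<in> S" and z2: "z2 \<in> S" and sn: "snd z1 = snd z2"
    and lt: "fst z1 < fst z2" for z1 z2
    unfolding E_def
  proof (rule sum_strict_mono)
    fix k assume "k \<in> {0..N}"
    hence k: "k \<le> N" by simp
    have cp: "0 < c k (snd z1)" using cpos[OF k Sprops(2)[OF z1]] .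
    have "fst z1 * c k (snd z1) < fst z2 * c k (snd z1)"
      using lt cp by (rule mult_strict_right_mono)
    hence "fst z1 * c k (snd z1) / \<beta> ^ k < fst z2 * c k (snd z1) / \<beta> ^ k"
      using beta by (intro divide_strict_right_mono) auto
    hence "h k z1 < h k z2" unfolding h_def using sn by simp
    hence "G k z2 < G k z1" unfolding G_def
      using decf.ginv_decr[OF dk[OF k]] Sprops(3)[OF z1 k] Sprops(3)[OF z2 k] unfolding RR_def by blast
    hence "c k (snd z1) * (G k z2 - w k) < c k (snd z1) * (G k z1 - w k)"
      using cp by (intro mult_strict_left_mono) auto
    thus "c k (snd z2) * (G k z2 - w k) < c k (snd z1) * (G k z1 - w k)"
      using sn by simp
  qed auto
  have injF: "inj_on F S"
  proof (rule inj_onI)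
    fix z1 z2 assume z1: "z1 \<in> S" and z2: "z2 \<in> S" and eq: "F z1 = F z2"
    have sn: "snd z1 = snd z2" and ee: "E z1 = E z2" using eq unfolding F_def by auto
    have "fst z1 = fst z2"
    proof (rule linorder_cases[of "fst z1" "fst z2"])
      assume "fst z1 < fst z2" thus ?thesis using Edec[OF z1 z2 sn] ee by simp
    next
      assume "fst z2 < fst z1" thus ?thesis using Edec[OF z2 z1 sn[symmetric]] ee by simp
    qed
    thus "z1 = z2" using sn by (simp add: prod_eq_iff)
  qed
  define D where "D k = inverse (v'' k (x0 k))" for k
  have gd0: "(ginv (v' k) has_real_derivative D k) (at (h k z0))" if "k \<le> N" for k
    using Gder[OF z0S that] Gz0[OF that] unfolding G_def D_def by simp
  define a where "a k = c k t0 * c k t0 / \<beta> ^ k * D k" for k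
  define B where "B = t0 * lam0 / \<beta> ^ m * D m + (x0 m - w m)"
  define b where "b k = (if k = m then B else 0)" for k
  have termder: "((\<lambda>z. c k (snd z) * (G k z - w k)) has_derivative (\<lambda>hh. a k * fst hh + b k * snd hh)) (at z0)"
    if k: "k \<le> N" for k
  proof (cases "k = m")
    case False
    have cc: "c k t = c k t0" for t unfolding c_def using False by simp
    have hk: "h k = (\<lambda>z. fst z * (c k t0 / \<beta> ^ k))"
      unfolding h_def using cc by (simp add: fun_eq_iff)
    have inner: "((\<lambda>z. fst z * (c k t0 / \<beta> ^ k)) has_derivative (\<lambda>hh. fst hh * (c k t0 / \<beta> ^ k))) (at z0)"
      by (rule has_derivative_mult_left[OF has_derivative_fst[OF has_derivative_ident]])
    have gd: "(ginv (v' k) has_real_derivative D k) (at ((\<lambda>z. fst z * (c k t0 / \<beta> ^ k)) z0))"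
      using gd0[OF k] unfolding hk by simp
    have ch: "((\<lambda>z. ginv (v' k) (fst z * (c k t0 / \<beta> ^ k))) has_derivative (\<lambda>hh. fst hh * (c k t0 / \<beta> ^ k) * D k)) (at z0)"
      using DERIV_compose_FDERIV[OF gd inner] .
    have t: "((\<lambda>z. c k t0 * (ginv (v' k) (fst z * (c k t0 / \<beta> ^ k)) - w k)) has_derivative
        (\<lambda>hh. c k t0 * (fst hh * (c k t0 / \<beta> ^ k) * D k - 0))) (at z0)"
      by (rule has_derivative_mult_right[OF has_derivative_diff[OF ch has_derivative_const]])
    have fe: "(\<lambda>z. c k (snd z) * (G k z - w k)) = (\<lambda>z. c k t0 * (ginv (v' k) (fst z * (c k t0 / \<beta> ^ k)) - w k))"
      unfolding G_def hk using cc by (simp add: fun_eq_iff)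
    have de: "(\<lambda>hh. c k t0 * (fst hh * (c k t0 / \<beta> ^ k) * D k - 0)) = (\<lambda>hh. a k * fst hh + b k * snd hh)"
      unfolding a_def b_def using False by (simp add: fun_eq_iff)
    show ?thesis using t unfolding fe de .
  next
    case True
    have hm: "h k = (\<lambda>z. fst z * snd z * inverse (\<beta> ^ k))"
      unfolding h_def c_def using True m0 by (simp add: fun_eq_iff divide_inverse)
    have inner: "((\<lambda>z. fst z * snd z * inverse (\<beta> ^ k)) has_derivative
        (\<lambda>hh. (fst z0 * snd hh + fst hh * snd z0) * inverse (\<beta> ^ k))) (at z0)"
      by (rule has_derivative_mult_left[OF has_derivative_mult[OF has_derivative_fst[OF has_derivative_ident] has_derivative_snd[OF has_derivative_ident]]])
    have gd: "(ginv (v' k) has_real_derivative D k) (at ((\<lambda>z. fst z * snd z * inverse (\<beta> ^ k)) z0))"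
      using gd0[OF k] unfolding hm by simp
    have ch: "((\<lambda>z. ginv (v' k) (fst z * snd z * inverse (\<beta> ^ k))) has_derivative
        (\<lambda>hh. (fst z0 * snd hh + fst hh * snd z0) * inverse (\<beta> ^ k) * D k)) (at z0)"
      using DERIV_compose_FDERIV[OF gd inner] .
    have t: "((\<lambda>z. snd z * (ginv (v' k) (fst z * snd z * inverse (\<beta> ^ k)) - w k)) has_derivative
        (\<lambda>hh. snd z0 * ((fst z0 * snd hh + fst hh * snd z0) * inverse (\<beta> ^ k) * D k - 0)
           + snd hh * (ginv (v' k) (fst z0 * snd z0 * inverse (\<beta> ^ k)) - w k))) (at z0)"
      by (rule has_derivative_mult[OF has_derivative_snd[OF has_derivative_ident] has_derivative_diff[OF ch has_derivative_const]])
    have g0: "ginv (v' k) (fst z0 * snd z0 * inverse (\<beta> ^ k)) = x0 k"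
      using Gz0[OF k] unfolding G_def hm by simp
    have fe: "(\<lambda>z. c k (snd z) * (G k z - w k)) = (\<lambda>z. snd z * (ginv (v' k) (fst z * snd z * inverse (\<beta> ^ k)) - w k))"
      unfolding G_def hm using True m0 by (simp add: fun_eq_iff c_def)
    have ctm: "c k t0 = t0" unfolding c_def using True m0 by simp
    have de: "(\<lambda>hh. snd z0 * ((fst z0 * snd hh + fst hh * snd z0) * inverse (\<beta> ^ k) * D k - 0)
           + snd hh * (ginv (v' k) (fst z0 * snd z0 * inverse (\<beta> ^ k)) - w k)) = (\<lambda>hh. a k * fst hh + b k * snd hh)"
      unfolding g0 a_def b_def B_def ctm using True
      by (simp add: fun_eq_iff sz0 divide_inverse algebra_simps)
    show ?thesis using t unfolding fe de .
  qed
  define A where "A = (\<Sum>k=0..N. a k)"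
  have Eder: "(E has_derivative (\<lambda>hh. A * fst hh + B * snd hh)) (at z0)"
  proof -
    have "((\<lambda>z. \<Sum>k\<in>{0..N}. c k (snd z) * (G k z - w k)) has_derivative
        (\<lambda>hh. \<Sum>k\<in>{0..N}. a k * fst hh + b k * snd hh)) (at z0)"
      by (rule has_derivative_sum) (use termder in auto)
    moreover have "(\<lambda>hh. \<Sum>k\<in>{0..N}. a k * fst hh + b k * snd hh) = (\<lambda>hh. A * fst hh + B * snd hh)"
    proof
      fix hh :: "real \<times> real"
      have "(\<Sum>k\<in>{0..N}. a k * fst hh + b k * snd hh) = (\<Sum>k\<in>{0..N}. a k) * fst hh + (\<Sum>k\<in>{0..N}. b k) * snd hh"
        by (simp add: sum.distrib sum_distrib_right)
      moreover have "(\<Sum>k\<in>{0..N}. b k) = B" unfolding b_def using m0 by simp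
      ultimately show "(\<Sum>k\<in>{0..N}. a k * fst hh + b k * snd hh) = A * fst hh + B * snd hh"
        unfolding A_def by simp
    qed
    ultimately show ?thesis unfolding E_def by simp
  qed
  have Dneg: "D k < 0" if "k \<le> N" for k
    unfolding D_def using conc x0p[OF that] that by simp
  have aneg: "a k < 0" if "k \<le> N" for k
  proof -
    have "0 < c k t0 * c k t0 / \<beta> ^ k" using cpos[OF that t0p] beta by simp
    thus ?thesis unfolding a_def using Dneg[OF that] mult_pos_neg by blast
  qed
  have Aneg: "A < 0"
  proof -
    have "A < (\<Sum>k=0..N. 0)" unfolding A_def by (rule sum_strict_mono) (use aneg in auto)
    thus ?thesis by simp
  qed
  have Fder: "(F has_derivative (\<lambda>hh. (A * fst hh + B * snd hh, snd hh))) (at z0)"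
    unfolding F_def by (rule has_derivative_Pair[OF Eder has_derivative_snd[OF has_derivative_ident]])
  define g' where "g' hh = ((fst hh - B * snd hh) / A, snd hh)" for hh :: "real \<times> real"
  have idF: "(\<lambda>hh. (A * fst hh + B * snd hh, snd hh)) \<circ> g' = id"
    using Aneg by (simp add: fun_eq_iff g'_def)
  define Ginv where "Ginv = inv_into S F"
  have gf: "Ginv (F z) = z" if "z \<in> S" for z
    unfolding Ginv_def using inv_into_f_f[OF injF that] .
  have Fz0: "F z0 = (0, t0)" unfolding F_def using Ez0 sz0 by simp
  have Ginvder: "(Ginv has_derivative g') (at (0, t0))"
    using has_derivative_inverse_strong[OF openS z0S contF gf Fder idF] unfolding Fz0 .
  have openFS: "open (F ` S)" by (rule invariance_of_domain[OF contF openS injF])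
  have "(0, t0) \<in> F ` S" using z0S Fz0 by force
  then obtain eps where eps: "eps > 0" "ball (0, t0) eps \<subseteq> F ` S"
    using openFS unfolding open_contains_ball by blast
  define Lam where "Lam t = fst (Ginv (0, t))" for t
  have zt: "Ginv (0, t) \<in> S \<and> Ginv (0, t) = (Lam t, t) \<and> E (Lam t, t) = 0" if t: "t \<in> ball t0 eps" for t
  proof -
    have "dist (0::real, t) (0, t0) < eps" using t by (simp add: dist_Pair_Pair dist_commute)
    hence inFS: "(0, t) \<in> F ` S" using eps by (auto simp: dist_commute)
    have inS: "Ginv (0, t) \<in> S" unfolding Ginv_def using inv_into_into[OF inFS] .
    have FG: "F (Ginv (0, t)) = (0, t)" unfolding Ginv_def using f_inv_into_f[OF inFS] .
    hence sn: "snd (Ginv (0, t)) = t" and e0: "E (Ginv (0, t)) = 0" unfolding F_def by auto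
    have eq: "Ginv (0, t) = (Lam t, t)" unfolding Lam_def using sn by (simp add: prod_eq_iff)
    show ?thesis using inS eq e0 by simp
  qed
  have Lam0: "Lam t0 = lam0"
    unfolding Lam_def using gf[OF z0S] Fz0 sz0 by simp
  define Lam' where "Lam' = - B / A"
  have LamD: "(Lam has_real_derivative Lam') (at t0)"
  proof -
    have p: "((\<lambda>t. (0::real, t)) has_derivative (\<lambda>h. (0, h))) (at t0)"
      by (rule has_derivative_Pair[OF has_derivative_const has_derivative_ident])
    have c1: "((\<lambda>t. Ginv (0, t)) has_derivative (\<lambda>h. g' (0, h))) (at t0)"
      using has_derivative_compose[OF p Ginvder] .
    have "(Lam has_derivative (\<lambda>h. fst (g' (0, h)))) (at t0)"
      unfolding Lam_def by (rule has_derivative_fst[OF c1])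
    moreover have "(\<lambda>h. fst (g' (0, h))) = (*) Lam'"
      unfolding g'_def Lam'_def using Aneg by (simp add: fun_eq_iff field_simps)
    ultimately show ?thesis unfolding has_field_derivative_def by simp
  qed
  have dem_eq: "demand N \<beta> v w (pb(m := t)) n = ginv (v' n) (Lam t * c n t / \<beta> ^ n)"
    if t: "t \<in> ball t0 eps" for t
  proof -
    have ztS: "(Lam t, t) \<in> S" and Et: "E (Lam t, t) = 0" using zt[OF t] by auto
    have Lp: "0 < Lam t" and tp: "0 < t" using ztS unfolding S_def by auto
    have hin: "h k (Lam t, t) \<in> RR k" if "k \<le> N" for k using ztS that unfolding S_def by auto
    have Gr: "G k (Lam t, t) > 0 \<and> v' k (G k (Lam t, t)) = h k (Lam t, t)" if "k \<le> N" for k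
      using decf.ginv_range[OF dk[OF that]] hin[OF that] unfolding RR_def G_def by blast
    define X where "X k = (if k \<le> N then G k (Lam t, t) else 0)" for k
    define p where "p = pb(m := t)"
    have pc: "p k = c k t" if "k \<in> {1..N}" for k
      unfolding p_def c_def using that by auto
    have admX: "admissible N X" unfolding admissible_def X_def using Gr by auto
    have budX: "X 0 + (\<Sum>k=1..N. p k * X k) = w 0 + (\<Sum>k=1..N. p k * w k)"
    proof -
      have "0 = (\<Sum>k=0..N. c k t * (G k (Lam t, t) - w k))" using Et unfolding E_def by simp
      also have "\<dots> = (G 0 (Lam t, t) - w 0) + (\<Sum>k=1..N. p k * X k - p k * w k)"
      proof -
        have "(\<Sum>k=1..N. c k t * (G k (Lam t, t) - w k)) = (\<Sum>k=1..N. p k * X k - p k * w k)"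
          by (rule sum.cong) (simp_all add: pc X_def right_diff_distrib)
        thus ?thesis unfolding sum_split0[of _ N] by (simp add: c_def)
      qed
      finally show ?thesis unfolding X_def by (simp add: sum_subtractf)
    qed
    have foc0X: "v' 0 (X 0) = Lam t" using Gr[of 0] unfolding X_def h_def c_def by simp
    have focX: "\<forall>k\<in>{1..N}. \<beta> ^ k * v' k (X k) = Lam t * p k"
    proof
      fix k assume k: "k \<in> {1..N}"
      hence "v' k (X k) = Lam t * c k t / \<beta> ^ k" using Gr[of k] unfolding X_def h_def by simp
      thus "\<beta> ^ k * v' k (X k) = Lam t * p k" using pc[OF k] beta by simp
    qed
    have "demand N \<beta> v w p = X"
      using foc_demand(2)[OF beta d1 decv admX budX Lp foc0X focX] .
    thus ?thesis unfolding p_def X_def G_def h_def using n0 by simp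
  qed
  define q where "q t = Lam t * c n t / \<beta> ^ n" for t
  define q' where "q' = (Lam' * c n t0 + lam0 * (if n = m then 1 else 0)) / \<beta> ^ n"
  have qD: "(q has_real_derivative q') (at t0)"
  proof (cases "n = m")
    case True
    have qf: "q = (\<lambda>t. Lam t * t / \<beta> ^ n)" unfolding q_def c_def using True m0 by (simp add: fun_eq_iff)
    have "((\<lambda>t. Lam t * t / \<beta> ^ n) has_real_derivative (Lam' * t0 + Lam t0 * 1) / \<beta> ^ n) (at t0)"
      using DERIV_cdivide[OF DERIV_mult[OF LamD DERIV_ident], of "\<beta> ^ n"] by simp
    thus ?thesis unfolding qf q'_def Lam0 c_def using True m0 by simp
  next
    case False
    have qf: "q = (\<lambda>t. Lam t * pb n / \<beta> ^ n)" unfolding q_def c_def using False n0 by (simp add: fun_eq_iff)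
    have "((\<lambda>t. Lam t * pb n / \<beta> ^ n) has_real_derivative Lam' * pb n / \<beta> ^ n) (at t0)"
      using DERIV_cdivide[OF DERIV_mult[OF LamD DERIV_const], of "pb n" "\<beta> ^ n"] by simp
    thus ?thesis unfolding qf q'_def c_def using False n0 by simp
  qed
  have qt0: "q t0 = h n z0" unfolding q_def h_def Lam0 sz0 ..
  have gdn: "(ginv (v' n) has_real_derivative D n) (at (q t0))" using gd0[OF n0(2)] unfolding qt0 .
  have Xder: "((\<lambda>t. ginv (v' n) (q t)) has_real_derivative D n * q') (at t0)"
    using DERIV_chain2[OF gdn qD] .
  have final_der: "((\<lambda>t. demand N \<beta> v w (pb(m := t)) n) has_real_derivative D n * q') (at t0)"
  proof (rule has_field_derivative_transform_within_open[OF Xder])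
    show "open (ball t0 eps)" by simp
    show "t0 \<in> ball t0 eps" using eps by simp
    fix t assume "t \<in> ball t0 eps"
    thus "ginv (v' n) (q t) = demand N \<beta> v w (pb(m := t)) n" using dem_eq unfolding q_def by simp
  qed
  define r where "r k = v' k (x0 k) / (- v'' k (x0 k))" for k
  define Rr where "Rr = r 0 + (\<Sum>k=1..N. pb k * r k)"
  have rpos: "r k > 0" if "k \<le> N" for k
  proof -
    have "v' k (x0 k) > 0" "- v'' k (x0 k) > 0" using pos conc x0p[OF that] that by auto
    thus ?thesis unfolding r_def by (rule divide_pos_pos)
  qed
  have Rrpos: "Rr > 0"
  proof -
    have "(\<Sum>k=1..N. pb k * r k) \<ge> 0"
    proof (rule sum_nonneg)
      fix k assume k: "k \<in> {1..N}"
      hence "pb k > 0" "r k > 0" using pp rpos by auto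
      thus "0 \<le> pb k * r k" by simp
    qed
    thus ?thesis unfolding Rr_def using rpos[of 0] by simp
  qed
  have focall: "v' k (x0 k) = lam0 * c k t0 / \<beta> ^ k" if "k \<le> N" for k
  proof (cases "k = 0")
    case True thus ?thesis unfolding lam0_def c_def by simp
  next
    case False
    hence k: "k \<in> {1..N}" using that by auto
    thus ?thesis using foc0[OF k] ct0[OF k] beta by (simp add: field_simps)
  qed
  have vneg: "v'' k (x0 k) < 0" if "k \<le> N" for k using conc x0p[OF that] that by simp
  have a_eq: "a k = - (c k t0 * r k) / lam0" if "k \<le> N" for k
    unfolding a_def D_def r_def focall[OF that] using vneg[OF that] lam0p beta
    by (simp add: field_simps)
  have Aeq: "A = - Rr / lam0"
  proof -
    have "A = (\<Sum>k=0..N. - (c k t0 * r k) / lam0)"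
      unfolding A_def by (rule sum.cong) (simp_all add: a_eq)
    also have "\<dots> = - (\<Sum>k=0..N. c k t0 * r k) / lam0"
      by (simp add: sum_divide_distrib sum_negf)
    also have "(\<Sum>k=0..N. c k t0 * r k) = Rr"
    proof -
      have "(\<Sum>k=1..N. c k t0 * r k) = (\<Sum>k=1..N. pb k * r k)"
        by (rule sum.cong) (simp_all add: ct0)
      thus ?thesis unfolding sum_split0[of _ N] Rr_def by (simp add: c_def)
    qed
    finally show ?thesis .
  qed
  have ctm: "c m t0 = t0" unfolding c_def using m0 by simp
  have Beq: "B = x0 m - w m - r m"
  proof -
    have "t0 * lam0 / \<beta> ^ m * D m = - r m"
      unfolding D_def r_def focall[OF m0(2)] ctm using vneg[OF m0(2)] lam0p beta
      by (simp add: field_simps)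
    thus ?thesis unfolding B_def by simp
  qed
  have ctn: "c n t0 = pb n" using ct0 n by blast
  have pbn: "pb n > 0" using pp n by blast
  have Dn: "D n / \<beta> ^ n = - r n / (lam0 * pb n)"
    unfolding D_def r_def focall[OF n0(2)] ctn using vneg[OF n0(2)] lam0p beta pbn
    by (simp add: field_simps)
  have val: "D n * q' = r m * r n / Rr - (if m = n then r n / pb n else 0) + r n / Rr * (w m - x0 m)"
  proof -
    have "D n * q' = (D n / \<beta> ^ n) * (Lam' * pb n + lam0 * (if n = m then 1 else 0))"
      unfolding q'_def ctn by simp
    also have "\<dots> = - r n / (lam0 * pb n) * ((x0 m - w m - r m) * lam0 / Rr * pb n + lam0 * (if n = m then 1 else 0))"
      unfolding Dn Lam'_def Aeq Beq using Rrpos lam0p by (simp add: field_simps)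
    also have "\<dots> = r m * r n / Rr - (if m = n then r n / pb n else 0) + r n / Rr * (w m - x0 m)"
      using Rrpos lam0p pbn by (cases "m = n") (simp_all add: field_simps)
    finally show ?thesis .
  qed
  show ?thesis
    unfolding Let_def using final_der unfolding val r_def Rr_def t0_def .
qed


theorem lemma2:
  fixes I :: "'a set" and N :: nat and \<beta> :: real
    and u u' u'' :: "'a \<Rightarrow> nat \<Rightarrow> real \<Rightarrow> real"
    and \<omega> :: "'a \<Rightarrow> nat \<Rightarrow> real"
    and pb :: "nat \<Rightarrow> real" and xb :: "'a \<Rightarrow> nat \<Rightarrow> real"
  assumes fin: "finite I"
    and beta: "0 < \<beta>" "\<beta> < 1"
    and endow: "\<forall>i\<in>I. \<forall>n\<le>N. 0 \<le> \<omega> i n"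
    and d1: "\<forall>i\<in>I. \<forall>n\<le>N. \<forall>x>0. (u i n has_real_derivative u' i n x) (at x)"
    and d2: "\<forall>i\<in>I. \<forall>n\<le>N. \<forall>x>0. (u' i n has_real_derivative u'' i n x) (at x)"
    and c2: "\<forall>i\<in>I. \<forall>n\<le>N. continuous_on {0<..} (u'' i n)"
    and pos: "\<forall>i\<in>I. \<forall>n\<le>N. \<forall>x>0. u' i n x > 0"
    and conc: "\<forall>i\<in>I. \<forall>n\<le>N. \<forall>x>0. u'' i n x < 0"
    and inada: "\<forall>i\<in>I. \<forall>n\<le>N. filterlim (u' i n) at_top (at_right 0)"
    and eq: "competitive_equilibrium N \<beta> I u \<omega> pb xb"
  shows "\<forall>i\<in>I. \<forall>m\<in>{1..N}. \<forall>n\<in>{1..N}.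
    (let r = (\<lambda>k. u' i k (xb i k) / (- u'' i k (xb i k)));
         R = r 0 + (\<Sum>k=1..N. pb k * r k);
         S = r m * r n / R - (if m = n then r n / pb n else 0);
         M = r n / R * (\<omega> i m - xb i m)
     in ((\<lambda>t. demand N \<beta> (u i) (\<omega> i) (pb(m := t)) n) has_real_derivative (S + M)) (at (pb m)))"
proof (intro ballI)
  fix i m n assume i: "i \<in> I" and m: "m \<in> {1..N}" and n: "n \<in> {1..N}"
  have pp: "\<forall>k\<in>{1..N}. 0 < pb k" and dem: "is_demand N \<beta> (u i) (\<omega> i) pb (xb i)"
    using eq i unfolding competitive_equilibrium_def by auto
  have d1i: "\<forall>k\<le>N. \<forall>x>0. (u i k has_real_derivative u' i k x) (at x)" using d1 i by blast
  have d2i: "\<forall>k\<le>N. \<forall>x>0. (u' i k has_real_derivative u'' i k x) (at x)" using d2 i by blast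
  have posi: "\<forall>k\<le>N. \<forall>x>0. u' i k x > 0" using pos i by blast
  have conci: "\<forall>k\<le>N. \<forall>x>0. u'' i k x < 0" using conc i by blast
  show "let r = (\<lambda>k. u' i k (xb i k) / (- u'' i k (xb i k)));
         R = r 0 + (\<Sum>k=1..N. pb k * r k);
         S = r m * r n / R - (if m = n then r n / pb n else 0);
         M = r n / R * (\<omega> i m - xb i m)
     in ((\<lambda>t. demand N \<beta> (u i) (\<omega> i) (pb(m := t)) n) has_real_derivative (S + M)) (at (pb m))"
    by (rule main_agent[OF beta(1) d1i d2i posi conci pp dem m n])
qed

end
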